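(* Let $p\colon\mathbb{R}^n\to\mathbb{R}$ be a CPWL function and let $\{\mathcal{X}_i\}_{i\in[m]}$ be a family of closed connected subsets of $\mathbb{R}^n$ with $\bigcup_{i\in[m]}\mathcal{X}_i=\mathbb{R}^n$ and $p$ affine on each $\mathcal{X}_i$, such that $m$ is the minimum number of members among all such families of closed connected subsets. Let $\{\mathcal{H}_j\}_{j\in[k]}$ be any finite family of affine subspaces of $\mathbb{R}^n$ of dimension $n-1$. Then for every $i\in[m]$, $$\mathcal{X}_i\cap\left(\mathbb{R}^n\setminus\bigcup_{j\in[k]}\mathcal{H}_j\right)\neq\emptyset.$$
   Context: A function $p\colon\mathbb{R}^n\to\mathbb{R}$ is CPWL if there are finitely many closed subsets $\mathcal{U}_1,\dots,\mathcal{U}_m$ of $\mathbb{R}^n$ with $\mathbb{R}^n=\bigcup_i\mathcal{U}_i$ and $p$ affine on each $\mathcal{U}_i$. *)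

theory Defs
  imports "HOL-Analysis.Analysis"
begin

definition affine_on :: "('a::euclidean_space \<Rightarrow> real) \<Rightarrow> 'a set \<Rightarrow> bool" where
  "affine_on p U \<longleftrightarrow> (\<exists>a b. \<forall>x\<in>U. p x = a \<bullet> x + b)"

definition cpwl :: "('a::euclidean_space \<Rightarrow> real) \<Rightarrow> bool" where
  "cpwl p \<longleftrightarrow> (\<exists>m::nat. \<exists>U::nat \<Rightarrow> 'a set.
      (\<forall>i<m. closed (U i)) \<and> (\<Union>i<m. U i) = UNIV \<and> (\<forall>i<m. affine_on p (U i)))"

definition cc_family :: "('a::euclidean_space \<Rightarrow> real) \<Rightarrow> nat \<Rightarrow> (nat \<Rightarrow> 'a set) \<Rightarrow> bool" where
  "cc_family p m X \<longleftrightarrow> (\<forall>i<m. closed (X i) \<and> connected (X i) \<and> affine_on p (X i))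
      \<and> (\<Union>i<m. X i) = UNIV"

end

theory Submission
  imports Defs
begin

lemma hyp_union_interior:
  fixes H :: "nat \<Rightarrow> 'a::euclidean_space set"
  assumes "\<And>j. j < k \<Longrightarrow> affine (H j) \<and> aff_dim (H j) = int DIM('a) - 1"
  shows "interior (\<Union>j<k. H j) = {} \<and> closed (\<Union>j<k. H j)"
  using assms
proof (induction k)
  case 0
  then show ?case by simp
next
  case (Suc k)
  have IH: "interior (\<Union>j<k. H j) = {} \<and> closed (\<Union>j<k. H j)"
    using Suc by auto
  have hk: "affine (H k)" "aff_dim (H k) = int DIM('a) - 1" using Suc.prems by auto
  have ck: "closed (H k)" using hk affine_closed by blast
  have ik: "interior (H k) = {}"
  proof (rule ccontr)
    assume "interior (H k) \<noteq> {}"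
    then have "aff_dim (H k) = int DIM('a)" by (simp add: aff_dim_nonempty_interior)
    with hk show False by simp
  qed
  have eq: "(\<Union>j<Suc k. H j) = H k \<union> (\<Union>j<k. H j)" by (auto simp: lessThan_Suc)
  show ?case unfolding eq using IH ck ik interior_closed_Un_empty_interior[OF ck] by auto
qed

theorem lemma13:
  fixes p :: "'a::euclidean_space \<Rightarrow> real"
    and X :: "nat \<Rightarrow> 'a set" and m :: nat
    and H :: "nat \<Rightarrow> 'a set" and k :: nat
  assumes "cpwl p"
    and "cc_family p m X"
    and "\<And>m' Y. cc_family p m' Y \<Longrightarrow> m \<le> m'"
    and "\<And>j. j < k \<Longrightarrow> affine (H j) \<and> aff_dim (H j) = int DIM('a) - 1"
  shows "\<forall>i<m. X i \<inter> (UNIV - (\<Union>j<k. H j)) \<noteq> {}"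
proof (intro allI impI)
  fix i assume im: "i < m"
  show "X i \<inter> (UNIV - (\<Union>j<k. H j)) \<noteq> {}"
  proof
    assume "X i \<inter> (UNIV - (\<Union>j<k. H j)) = {}"
    then have sub: "X i \<subseteq> (\<Union>j<k. H j)" by blast
    have "interior (X i) = {}"
      using hyp_union_interior[OF assms(4)] interior_mono[OF sub] by auto
    then have dense: "closure (UNIV - X i) = UNIV"
      using closure_complement[of "X i"] by (simp add: Compl_eq_Diff_UNIV)
    define Y where "Y = (\<lambda>j. if j < i then X j else X (Suc j))"
    have cf: "\<forall>j<m. closed (X j) \<and> connected (X j) \<and> affine_on p (X j)"
      and cov: "(\<Union>j<m. X j) = UNIV" using assms(2) unfolding cc_family_def by auto
    have Yfam: "\<forall>j<m-1. closed (Y j) \<and> connected (Y j) \<and> affine_on p (Y j)"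
      using cf im unfolding Y_def by auto
    have Yun: "(\<Union>j<m-1. Y j) = (\<Union>j\<in>{..<m}-{i}. X j)"
    proof
      show "(\<Union>j<m-1. Y j) \<subseteq> (\<Union>j\<in>{..<m}-{i}. X j)"
        unfolding Y_def by (fastforce split: if_splits)
    next
      show "(\<Union>j\<in>{..<m}-{i}. X j) \<subseteq> (\<Union>j<m-1. Y j)"
      proof
        fix x assume "x \<in> (\<Union>j\<in>{..<m}-{i}. X j)"
        then obtain j where j: "j < m" "j \<noteq> i" "x \<in> X j" by auto
        show "x \<in> (\<Union>j<m-1. Y j)"
        proof (cases "j < i")
          case True
          then show ?thesis using j im unfolding Y_def by (intro UN_I[of j]) auto
        next
          case False
          then obtain l where "j = Suc l" "i \<le> l" using j by (cases j) auto
          then show ?thesis using j im unfolding Y_def by (intro UN_I[of l]) auto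
        qed
      qed
    qed
    have clA: "closed (\<Union>j\<in>{..<m}-{i}. X j)"
      using cf by (intro closed_UN) auto
    have "UNIV - X i \<subseteq> (\<Union>j\<in>{..<m}-{i}. X j)" using cov by blast
    then have "closure (UNIV - X i) \<subseteq> (\<Union>j\<in>{..<m}-{i}. X j)"
      using clA closure_minimal by blast
    then have "(\<Union>j<m-1. Y j) = UNIV" using dense Yun by auto
    then have "cc_family p (m-1) Y" using Yfam unfolding cc_family_def by auto
    then have "m \<le> m - 1" using assms(3) by blast
    with im show False by simp
  qed
qed

end
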